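(* Let $h\ge 3$ and let $W\in\mathcal W^2_{h\times 3}$ be an atomic $2$-full word. Then $W$ contains a bench with its seat in column $1$ and legs in column $2$, and a bench with its seat in column $3$ and legs in column $2$.
   Context: A 2-dimensional binary word of dimensions $h\times w$ is an $h\times w$ matrix with entries in $\{\square,\blacksquare\}$ (filled cells $\blacksquare$, empty cells $\square$). Two cells $(i,j),(i',j')$ are adjacent if $|i-i'|+|j-j'|=1$; the degree of a filled cell is the number of filled cells adjacent to it. $\mathcal W^2_{h\times w}$ is the set of $h\times w$ binary words in which every filled cell has degree at most $2$; $W$ is $2$-full if its number of filled cells is maximal in $\mathcal W^2_{h\times w}$. $W$ is atomic if no row of $W$ consists only of empty cells. For columns $j,j'$ with $|j-j'|=1$, a bench with seat in column $j$ and legs in column $j'$ is given by integers $n\ge 3$ and $i$ with $1\le i\le i+n-1\le h$ such that the cells $(i,j),(i+1,j),\dots,(i+n-1,j)$ are all filled, the cells $(i,j')$ and $(i+n-1,j')$ are filled, and the cells $(i+1,j'),\dots,(i+n-2,j')$ are empty. *)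

theory Defs
  imports Main
begin

text \<open>A binary word of dimensions h x w is represented by its set of filled cells,
  a subset of {1..h} x {1..w} (cell (i,j) = row i, column j).\<close>

definition is_word :: "nat \<Rightarrow> nat \<Rightarrow> (nat \<times> nat) set \<Rightarrow> bool" where
  "is_word h w W \<longleftrightarrow> W \<subseteq> {1..h} \<times> {1..w}"

definition adjacent :: "nat \<times> nat \<Rightarrow> nat \<times> nat \<Rightarrow> bool" where
  "adjacent c c' \<longleftrightarrow>
     \<bar>int (fst c) - int (fst c')\<bar> + \<bar>int (snd c) - int (snd c')\<bar> = 1"

definition degree :: "(nat \<times> nat) set \<Rightarrow> nat \<times> nat \<Rightarrow> nat" where
  "degree W c = card {c' \<in> W. adjacent c c'}"

definition W2 :: "nat \<Rightarrow> nat \<Rightarrow> (nat \<times> nat) set set" where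
  "W2 h w = {W. is_word h w W \<and> (\<forall>c\<in>W. degree W c \<le> 2)}"

definition two_full :: "nat \<Rightarrow> nat \<Rightarrow> (nat \<times> nat) set \<Rightarrow> bool" where
  "two_full h w W \<longleftrightarrow> W \<in> W2 h w \<and> (\<forall>V \<in> W2 h w. card V \<le> card W)"

definition atomic :: "nat \<Rightarrow> nat \<Rightarrow> (nat \<times> nat) set \<Rightarrow> bool" where
  "atomic h w W \<longleftrightarrow> (\<forall>i\<in>{1..h}. \<exists>j\<in>{1..w}. (i,j) \<in> W)"

text \<open>Bench with seat in column j and legs in column j' (|j - j'| = 1), in an h-row word.\<close>
definition has_bench :: "nat \<Rightarrow> (nat \<times> nat) set \<Rightarrow> nat \<Rightarrow> nat \<Rightarrow> bool" where
  "has_bench h W j j' \<longleftrightarrow>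
     (\<exists>n i. n \<ge> 3 \<and> 1 \<le> i \<and> i + n - 1 \<le> h \<and>
        (\<forall>k\<in>{i..i+n-1}. (k,j) \<in> W) \<and>
        (i,j') \<in> W \<and> (i+n-1,j') \<in> W \<and>
        (\<forall>k\<in>{i+1..i+n-2}. (k,j') \<notin> W))"

end

theory Submission
  imports Defs
begin


type_synonym row = "bool \<times> bool \<times> bool"
type_synonym flags = "bool \<times> bool \<times> bool \<times> bool"

definition vt :: "row \<Rightarrow> row \<Rightarrow> row \<Rightarrow> bool" where
  "vt a b c = (case (a,b,c) of ((a1,a2,a3),(b1,b2,b3),(c1,c2,c3)) \<Rightarrow>
     \<not>(b1 \<and> a1 \<and> c1 \<and> b2) \<and> \<not>(b3 \<and> a3 \<and> c3 \<and> b2) \<and>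
     \<not>(b2 \<and> ((a2 \<and> c2 \<and> b1) \<or> (a2 \<and> c2 \<and> b3) \<or> (a2 \<and> b1 \<and> b3) \<or> (c2 \<and> b1 \<and> b3))))"

definition cnt :: "row \<Rightarrow> int" where
  "cnt r = (case r of (x,y,z) \<Rightarrow> of_bool x + of_bool y + of_bool z)"

definition upd :: "row \<Rightarrow> row \<Rightarrow> flags \<Rightarrow> flags" where
  "upd b c fl = (case (b,c,fl) of ((b1,b2,b3),(c1,c2,c3),(o1,o3,f1,f3)) \<Rightarrow>
     ((o1 \<or> (b1 \<and> b2)) \<and> c1 \<and> \<not> c2, (o3 \<or> (b3 \<and> b2)) \<and> c3 \<and> \<not> c2,
      f1 \<or> (o1 \<and> c1 \<and> c2), f3 \<or> (o3 \<and> c3 \<and> c2)))"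

definition AA :: "row \<Rightarrow> row \<Rightarrow> int" where
 "AA a b = (case (a,b) of ((a1,a2,a3),(b1,b2,b3)) \<Rightarrow> (if b1 then (if b2 then (if b3 then (if a1 then (if a2 then (-100) else 0) else (if a2 then (-100) else (if a3 then 0 else 1))) else (if a1 then (if a2 then 0 else 1) else 1)) else 1) else (if b2 then (if b3 then (if a2 then (if a3 then 0 else 1) else 1) else 1) else (if b3 then 1 else 2))))"

definition BB :: "row \<Rightarrow> row \<Rightarrow> flags \<Rightarrow> int" where
 "BB a b fl = (case (a,b,fl) of ((a1,a2,a3),(b1,b2,b3),(o1,o3,f1,f3)) \<Rightarrow> (if f1 then (if f3 then (-100) else (if o3 then (if b1 then (if b2 then (if b3 then (if a2 then (-100) else 0) else 0) else 0) else (if b2 then (if b3 then (if a2 then 0 else 1) else 1) else 1)) else (if b1 then (if b2 then (if b3 then (if a2 then (-100) else 0) else (if a1 then 0 else 1)) else 1) else (if b2 then (if b3 then (if a2 then 0 else 1) else 1) else 1)))) else (if f3 then (if o1 then (if b1 then (if b2 then (if b3 then (if a2 then (-100) else 0) else (if a2 then 0 else 1)) else (if b3 then 0 else 1)) else (if b3 then 0 else 1)) else (if b1 then (if b2 then (if b3 then (if a2 then (-100) else 0) else (if a2 then 0 else 1)) else 1) else (if b2 then (if b3 then (if a3 then 0 else 1) else 1) else 1))) else (if o1 then (if o3 then (if b1 then (if b2 then (if b3 then (if a2 then (-100) else 0) else (if a2 then 0 else 1)) else (if b3 then 0 else 1)) else (if b2 then (if b3 then (if a2 then 0 else 1) else 1)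 else 1)) else (if b1 then (if b2 then (if b3 then (if a2 then (-100) else 0) else (if a1 then (if a2 then 0 else 1) else 1)) else 1) else (if b2 then (if b3 then (if a2 then 0 else 1) else 1) else 1))) else (if o3 then (if b1 then (if b2 then (if b3 then (if a2 then (-100) else 0) else (if a2 then 0 else 1)) else 1) else (if b2 then (if b3 then (if a2 then (if a3 then 0 else 1) else 1) else 1) else 1)) else (if b1 then (if b2 then (if b3 then (if a2 then (-100) else 0) else (if a1 then (if a2 then 0 else 1) else 1)) else 1) else (if b2 then (if b3 then (if a2 then (if a3 then 0 else 1) else 1) else 1) else 1)))))))"

definition rows :: "row list" where
  "rows = [(x,y,z). x \<leftarrow> [False,True], y \<leftarrow> [False,True], z \<leftarrow> [False,True]]"
definition fls :: "flags list" where
  "fls = [(x,y,z,w). x \<leftarrow> [False,True], y \<leftarrow> [False,True], z \<leftarrow> [False,True], w \<leftarrow> [False,True]]"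

definition stepok :: "row \<Rightarrow> row \<Rightarrow> row \<Rightarrow> flags \<Rightarrow> bool" where
  "stepok a b c fl = (vt a b c \<and> c \<noteq> (False,False,False) \<longrightarrow>
     (AA b c = -100 \<or> (AA a b \<noteq> -100 \<and> AA b c + (cnt c - 2) \<le> AA a b)) \<and>
     (BB b c (upd b c fl) = -100 \<or> (BB a b fl \<noteq> -100 \<and> BB b c (upd b c fl) + (cnt c - 2) \<le> BB a b fl)))"

definition endok :: "row \<Rightarrow> row \<Rightarrow> flags \<Rightarrow> bool" where
  "endok a b fl = (vt a b (False,False,False) \<longrightarrow> AA a b \<noteq> -100 \<and> AA a b \<ge> 0 \<and>
     (\<not> (fst (snd (snd fl)) \<and> snd (snd (snd fl))) \<longrightarrow> BB a b fl \<noteq> -100 \<and> BB a b fl \<ge> 0))"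

lemma check_step: "list_all (\<lambda>a. list_all (\<lambda>b. list_all (\<lambda>c. list_all (\<lambda>fl. stepok a b c fl) fls) rows) rows) rows"
  by code_simp

lemma check_end: "list_all (\<lambda>a. list_all (\<lambda>b. list_all (\<lambda>fl. endok a b fl) fls) rows) rows"
  by code_simp



definition R :: "(nat \<times> nat) set \<Rightarrow> nat \<Rightarrow> row" where
  "R W i = ((i,1) \<in> W, (i,2) \<in> W, (i,3) \<in> W)"

lemma adj_char: "adjacent (i,j) (p,q) \<longleftrightarrow>
   (p = i \<and> (q = j+1 \<or> q+1 = j)) \<or> (q = j \<and> (p = i+1 \<or> p+1 = i))"
  unfolding adjacent_def by auto

lemma finite_word: "is_word h w W \<Longrightarrow> finite W"
  unfolding is_word_def by (meson finite_SigmaI finite_atLeastAtMost finite_subset)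

lemma deg3:
  assumes "finite W" "x\<in>W" "y\<in>W" "z\<in>W" "x\<noteq>y" "x\<noteq>z" "y\<noteq>z"
    "adjacent c x" "adjacent c y" "adjacent c z"
  shows "3 \<le> degree W c"
proof -
  have "{x,y,z} \<subseteq> {c'\<in>W. adjacent c c'}" using assms by auto
  moreover have "finite {c'\<in>W. adjacent c c'}" using assms(1) by auto
  ultimately have "card {x,y,z} \<le> degree W c" unfolding degree_def by (rule card_mono[rotated])
  moreover have "card {x,y,z} = 3" using assms by auto
  ultimately show ?thesis by simp
qed

lemma vt_R:
  assumes "is_word h 3 W" "\<forall>c\<in>W. degree W c \<le> 2" "1 \<le> i"
  shows "vt (R W (i-1)) (R W i) (R W (i+1))"
proof -
  have fin: "finite W" using assms(1) finite_word by blast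
  have no3: False if "c\<in>W" "x\<in>W" "y\<in>W" "z\<in>W" "x\<noteq>y" "x\<noteq>z" "y\<noteq>z"
    "adjacent c x" "adjacent c y" "adjacent c z" for c x y z
    using deg3[OF fin that(2-10)] assms(2) that(1) by fastforce
  have a1: "adjacent (i,j) (i-1,j)" "adjacent (i,j) (i+1,j)" for j
    using assms(3) by (auto simp: adj_char)
  have a2: "adjacent (i,1) (i,2)" "adjacent (i,2) (i,1)" "adjacent (i,2) (i,3)" "adjacent (i,3) (i,2)"
    by (auto simp: adj_char)
  have d: "i - 1 \<noteq> i + 1" by simp
  have n1: "\<not>((i,1)\<in>W \<and> (i-1,1)\<in>W \<and> (i+1,1)\<in>W \<and> (i,2)\<in>W)"
    using no3[of "(i,1)" "(i-1,1)" "(i+1,1)" "(i,2)"] a1 a2 d by auto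
  have n2: "\<not>((i,3)\<in>W \<and> (i-1,3)\<in>W \<and> (i+1,3)\<in>W \<and> (i,2)\<in>W)"
    using no3[of "(i,3)" "(i-1,3)" "(i+1,3)" "(i,2)"] a1 a2 d by auto
  have n3: "\<not>((i,2)\<in>W \<and> (i-1,2)\<in>W \<and> (i+1,2)\<in>W \<and> (i,1)\<in>W)"
    using no3[of "(i,2)" "(i-1,2)" "(i+1,2)" "(i,1)"] a1 a2 d by auto
  have n4: "\<not>((i,2)\<in>W \<and> (i-1,2)\<in>W \<and> (i+1,2)\<in>W \<and> (i,3)\<in>W)"
    using no3[of "(i,2)" "(i-1,2)" "(i+1,2)" "(i,3)"] a1 a2 d by auto
  have n5: "\<not>((i,2)\<in>W \<and> (i-1,2)\<in>W \<and> (i,1)\<in>W \<and> (i,3)\<in>W)"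
    using no3[of "(i,2)" "(i-1,2)" "(i,1)" "(i,3)"] a1 a2 d by auto
  have n6: "\<not>((i,2)\<in>W \<and> (i+1,2)\<in>W \<and> (i,1)\<in>W \<and> (i,3)\<in>W)"
    using no3[of "(i,2)" "(i+1,2)" "(i,1)" "(i,3)"] a1 a2 d by auto
  show ?thesis unfolding vt_def R_def prod.case using n1 n2 n3 n4 n5 n6 by blast
qed

lemma card_rows:
  assumes "is_word h 3 W"
  shows "int (card W) = (\<Sum>i\<in>{1..h}. cnt (R W i))"
proof -
  have eq: "({1..h} \<times> {1..3}) \<inter> W = W" using assms unfolding is_word_def by auto
  have "(\<Sum>x\<in>{1..h} \<times> {1..3}. of_bool (x \<in> W) :: int) = int (card W)"
  proof -
    have "(\<Sum>x\<in>{1..h} \<times> {1..3}. of_bool (x \<in> W) :: int) = int (card ({1..h} \<times> {1..3} \<inter> {x. x \<in> W}))"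
      using sum_of_bool_eq[of "{1..h} \<times> {1..3::nat}" "\<lambda>x. x \<in> W"] by simp
    thus ?thesis by (simp only: Collect_mem_eq eq)
  qed
  moreover have "(\<Sum>x\<in>{1..h} \<times> {1..3}. of_bool (x \<in> W) :: int) = (\<Sum>i\<in>{1..h}. \<Sum>j\<in>{1..3}. of_bool ((i,j) \<in> W))"
    by (subst sum.cartesian_product) simp
  moreover have "(\<Sum>j\<in>{1..3::nat}. of_bool ((i,j) \<in> W) :: int) = cnt (R W i)" for i
  proof -
    have "{1..3::nat} = {1,2,3}" by auto
    thus ?thesis by (simp add: cnt_def R_def)
  qed
  ultimately show ?thesis by simp
qed



primrec fl :: "(nat \<times> nat) set \<Rightarrow> nat \<Rightarrow> flags" where
  "fl W 0 = (False,False,False,False)"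
| "fl W (Suc n) = upd (R W n) (R W (Suc n)) (fl W n)"

definition opn :: "(nat \<times> nat) set \<Rightarrow> nat \<Rightarrow> nat \<Rightarrow> bool" where
  "opn W j n = (\<exists>i. 1 \<le> i \<and> i < n \<and> (\<forall>k. i \<le> k \<and> k \<le> n \<longrightarrow> (k,j) \<in> W) \<and> (i,2) \<in> W
      \<and> (\<forall>k. i < k \<and> k \<le> n \<longrightarrow> (k,2) \<notin> W))"

definition fnd :: "(nat \<times> nat) set \<Rightarrow> nat \<Rightarrow> nat \<Rightarrow> bool" where
  "fnd W j n = (\<exists>i m. 1 \<le> i \<and> i + 2 \<le> m \<and> m \<le> n \<and> (\<forall>k. i \<le> k \<and> k \<le> m \<longrightarrow> (k,j) \<in> W)
      \<and> (i,2) \<in> W \<and> (m,2) \<in> W \<and> (\<forall>k. i < k \<and> k < m \<longrightarrow> (k,2) \<notin> W))"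

lemma opn_step:
  assumes "is_word h 3 W" "opn W j n \<or> ((n,j) \<in> W \<and> (n,2) \<in> W)" "(Suc n, j) \<in> W" "(Suc n, 2) \<notin> W"
  shows "opn W j (Suc n)"
  using assms(2)
proof
  assume "opn W j n"
  then obtain i where i: "1 \<le> i" "i < n" "\<forall>k. i \<le> k \<and> k \<le> n \<longrightarrow> (k,j) \<in> W" "(i,2) \<in> W"
      "\<forall>k. i < k \<and> k \<le> n \<longrightarrow> (k,2) \<notin> W" unfolding opn_def by blast
  show ?thesis unfolding opn_def
    apply (rule exI[of _ i])
    using i assms(3,4) by (auto simp: le_Suc_eq)
next
  assume a: "(n,j) \<in> W \<and> (n,2) \<in> W"
  hence "1 \<le> n" using assms(1) unfolding is_word_def by auto
  show ?thesis unfolding opn_def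
    apply (rule exI[of _ n])
    using a assms(3,4) \<open>1 \<le> n\<close> by (auto simp: le_Suc_eq)
qed

lemma fnd_mono: "fnd W j n \<Longrightarrow> fnd W j (Suc n)"
  unfolding fnd_def by (meson le_SucI)

lemma fnd_step:
  assumes "opn W j n" "(Suc n, j) \<in> W" "(Suc n, 2) \<in> W"
  shows "fnd W j (Suc n)"
proof -
  obtain i where i: "1 \<le> i" "i < n" "\<forall>k. i \<le> k \<and> k \<le> n \<longrightarrow> (k,j) \<in> W" "(i,2) \<in> W"
      "\<forall>k. i < k \<and> k \<le> n \<longrightarrow> (k,2) \<notin> W" using assms(1) unfolding opn_def by blast
  show ?thesis unfolding fnd_def
    apply (rule exI[of _ i], rule exI[of _ "Suc n"])
    using i assms(2,3) by (auto simp: le_Suc_eq less_Suc_eq_le)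
qed

lemma fl_sound:
  assumes "is_word h 3 W"
  shows "(fst (fl W n) \<longrightarrow> opn W 1 n) \<and> (fst (snd (fl W n)) \<longrightarrow> opn W 3 n) \<and>
         (fst (snd (snd (fl W n))) \<longrightarrow> fnd W 1 n) \<and> (snd (snd (snd (fl W n))) \<longrightarrow> fnd W 3 n)"
proof (induction n)
  case 0
  then show ?case by simp
next
  case (Suc n)
  obtain o1 o3 f1 f3 where F: "fl W n = (o1,o3,f1,f3)" by (cases "fl W n") auto
  have s1: "opn W 1 (Suc n)" if "(o1 \<or> ((n,1)\<in>W \<and> (n,2)\<in>W)) \<and> (Suc n,1)\<in>W \<and> (Suc n,2)\<notin>W"
    using opn_step[OF assms, of 1 n] that Suc.IH F by auto
  have s3: "opn W 3 (Suc n)" if "(o3 \<or> ((n,3)\<in>W \<and> (n,2)\<in>W)) \<and> (Suc n,3)\<in>W \<and> (Suc n,2)\<notin>W"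
    using opn_step[OF assms, of 3 n] that Suc.IH F by auto
  have t1: "fnd W 1 (Suc n)" if "f1 \<or> (o1 \<and> (Suc n,1)\<in>W \<and> (Suc n,2)\<in>W)"
    using fnd_step[of W 1 n] fnd_mono[of W 1 n] that Suc.IH F by auto
  have t3: "fnd W 3 (Suc n)" if "f3 \<or> (o3 \<and> (Suc n,3)\<in>W \<and> (Suc n,2)\<in>W)"
    using fnd_step[of W 3 n] fnd_mono[of W 3 n] that Suc.IH F by auto
  show ?case using s1 s3 t1 t3 by (simp add: F upd_def R_def)
qed

lemma fnd_bench: "fnd W j h \<Longrightarrow> has_bench h W j 2"
proof -
  assume "fnd W j h"
  then obtain i m where im: "1 \<le> i" "i + 2 \<le> m" "m \<le> h" "\<forall>k. i \<le> k \<and> k \<le> m \<longrightarrow> (k,j) \<in> W"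
      "(i,2) \<in> W" "(m,2) \<in> W" "\<forall>k. i < k \<and> k < m \<longrightarrow> (k,2) \<notin> W" unfolding fnd_def by blast
  have e1: "i + (m - i + 1) - 1 = m" "i + (m - i + 1) - 2 = m - 1" using im by auto
  show ?thesis unfolding has_bench_def
    apply (rule exI[of _ "m - i + 1"], rule exI[of _ i])
    unfolding e1 using im by auto
qed



lemma rows_all: "r \<in> set rows"
proof -
  obtain x y z where "r = (x,y,z)" by (cases r) auto
  thus ?thesis unfolding rows_def by (cases x; cases y; cases z) simp_all
qed
lemma fls_all: "f \<in> set fls"
proof -
  obtain x y z w where "f = (x,y,z,w)" by (cases f) auto
  thus ?thesis unfolding fls_def by (cases x; cases y; cases z; cases w) simp_all
qed
lemma stepok_all: "stepok a b c f"
proof -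
  have "\<forall>a\<in>set rows. \<forall>b\<in>set rows. \<forall>c\<in>set rows. \<forall>f\<in>set fls. stepok a b c f"
    using check_step by (simp only: list_all_iff)
  thus ?thesis using rows_all fls_all by blast
qed
lemma endok_all: "endok a b f"
proof -
  have "\<forall>a\<in>set rows. \<forall>b\<in>set rows. \<forall>f\<in>set fls. endok a b f"
    using check_end by (simp only: list_all_iff)
  thus ?thesis using rows_all fls_all by blast
qed
definition Inv :: "row \<Rightarrow> row \<Rightarrow> flags \<Rightarrow> int \<Rightarrow> bool" where
  "Inv a b f S = ((AA a b = -100 \<or> S + AA a b \<le> 2) \<and> (BB a b f = -100 \<or> S + BB a b f \<le> 1))"

lemma inv_step: "Inv a b f S \<Longrightarrow> vt a b c \<Longrightarrow> c \<noteq> (False,False,False) \<Longrightarrow>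
   Inv b c (upd b c f) (S + (cnt c - 2))"
proof -
  assume a: "Inv a b f S" "vt a b c" "c \<noteq> (False,False,False)"
  have s: "stepok a b c f" by (rule stepok_all)
  show ?thesis using a s unfolding Inv_def stepok_def by linarith
qed

definition Sn :: "(nat \<times> nat) set \<Rightarrow> nat \<Rightarrow> int" where
  "Sn W n = (\<Sum>i\<in>{1..n}. cnt (R W i) - 2)"

lemma R0: "is_word h 3 W \<Longrightarrow> R W 0 = (False,False,False)"
  unfolding R_def is_word_def by auto
lemma Rh: "is_word h 3 W \<Longrightarrow> R W (Suc h) = (False,False,False)"
  unfolding R_def is_word_def by auto

lemma inv_all:
  assumes w: "is_word h 3 W" and d: "\<forall>c\<in>W. degree W c \<le> 2" and at: "atomic h 3 W"
  shows "n \<le> h \<Longrightarrow> Inv (R W (n-1)) (R W n) (fl W n) (Sn W n)"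
proof (induction n)
  case 0
  show ?case using R0[OF w] by (simp add: Inv_def Sn_def AA_def BB_def)
next
  case (Suc n)
  have IH: "Inv (R W (n-1)) (R W n) (fl W n) (Sn W n)" using Suc by simp
  have v: "vt (R W (n-1)) (R W n) (R W (Suc n))"
  proof (cases "n = 0")
    case True
    then show ?thesis using R0[OF w] by (simp add: vt_def)
  next
    case False
    then show ?thesis using vt_R[OF w d, of n] by simp
  qed
  have ne: "R W (Suc n) \<noteq> (False,False,False)"
  proof
    assume "R W (Suc n) = (False,False,False)"
    moreover have "Suc n \<in> {1..h}" using Suc.prems by simp
    then obtain j where "j \<in> {1..3}" "(Suc n, j) \<in> W" using at unfolding atomic_def by blast
    moreover have "j = 1 \<or> j = 2 \<or> j = 3" using \<open>j \<in> {1..3}\<close> by auto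
    ultimately show False unfolding R_def by auto
  qed
  have "Sn W (Suc n) = Sn W n + (cnt (R W (Suc n)) - 2)" unfolding Sn_def by simp
  then show ?case using inv_step[OF IH v ne] by simp
qed

lemma Sn_card: "is_word h 3 W \<Longrightarrow> Sn W h = int (card W) - 2 * int h"
  unfolding Sn_def using card_rows[of h W] by (simp add: sum_subtractf)

lemma deg2:
  assumes fin: "finite V" and H: "\<And>p q. (p,q) \<in> V \<Longrightarrow> adjacent c (p,q) \<Longrightarrow> (p,q) = x \<or> (p,q) = y"
  shows "degree V c \<le> 2"
proof -
  have sub: "{c'\<in>V. adjacent c c'} \<subseteq> {x,y}" using H by auto
  have "degree V c \<le> card {x,y}" unfolding degree_def by (rule card_mono[OF _ sub]) simp
  also have "\<dots> \<le> 2" by (simp add: card_insert_le_m1)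
  finally show ?thesis .
qed

lemma constr_deg:
  assumes h3: "h \<ge> (3::nat)" and Vd: "V = {1..h} \<times> {1,3} \<union> {(1,2),(h,2)}" and c: "(i,j) \<in> V"
  shows "degree V (i,j) \<le> 2"
proof -
  have fin: "finite V" unfolding Vd by auto
  have "(1 \<le> i \<and> i \<le> h \<and> (j = 1 \<or> j = 3)) \<or> (i = 1 \<and> j = 2) \<or> (i = h \<and> j = 2)"
    using c unfolding Vd by auto
  moreover
  { assume a: "1 \<le> i" "i \<le> h" "j = 1" "i = 1"
    have ?thesis by (rule deg2[OF fin, of _ "(2,1)" "(1,2)"]) (use a h3 Vd in \<open>auto simp: adj_char\<close>) }
  moreover
  { assume a: "1 \<le> i" "i \<le> h" "j = 1" "i \<noteq> 1" "i = h"
    have ?thesis by (rule deg2[OF fin, of _ "(h-1,1)" "(h,2)"]) (use a h3 Vd in \<open>auto simp: adj_char\<close>) }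
  moreover
  { assume a: "1 \<le> i" "i \<le> h" "j = 1" "i \<noteq> 1" "i \<noteq> h"
    have ?thesis by (rule deg2[OF fin, of _ "(i-1,1)" "(i+1,1)"]) (use a h3 Vd in \<open>auto simp: adj_char\<close>) }
  moreover
  { assume a: "1 \<le> i" "i \<le> h" "j = 3" "i = 1"
    have ?thesis by (rule deg2[OF fin, of _ "(2,3)" "(1,2)"]) (use a h3 Vd in \<open>auto simp: adj_char\<close>) }
  moreover
  { assume a: "1 \<le> i" "i \<le> h" "j = 3" "i \<noteq> 1" "i = h"
    have ?thesis by (rule deg2[OF fin, of _ "(h-1,3)" "(h,2)"]) (use a h3 Vd in \<open>auto simp: adj_char\<close>) }
  moreover
  { assume a: "1 \<le> i" "i \<le> h" "j = 3" "i \<noteq> 1" "i \<noteq> h"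
    have ?thesis by (rule deg2[OF fin, of _ "(i-1,3)" "(i+1,3)"]) (use a h3 Vd in \<open>auto simp: adj_char\<close>) }
  moreover
  { assume a: "i = 1" "j = 2"
    have ?thesis by (rule deg2[OF fin, of _ "(1,1)" "(1,3)"]) (use a h3 Vd in \<open>auto simp: adj_char\<close>) }
  moreover
  { assume a: "i = h" "j = 2"
    have ?thesis by (rule deg2[OF fin, of _ "(h,1)" "(h,3)"]) (use a h3 Vd in \<open>auto simp: adj_char\<close>) }
  ultimately show ?thesis by blast
qed

lemma construction:
  assumes "h \<ge> 3"
  shows "\<exists>V\<in>W2 h 3. card V = 2*h+2"
proof -
  define V :: "(nat \<times> nat) set" where "V = {1..h} \<times> {1,3} \<union> {(1,2),(h,2)}"
  have cV: "card V = 2*h+2"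
  proof -
    have "card ({1..h} \<times> {1::nat,3}) = h*2" by (simp add: card_cartesian_product)
    moreover have "card {(1::nat,2::nat),(h,2)} = 2" using assms by auto
    moreover have "({1..h} \<times> {1::nat,3}) \<inter> {(1,2),(h,2)} = {}" by auto
    moreover have "finite ({1..h} \<times> {1::nat,3})" "finite {(1::nat,2::nat),(h,2)}" by auto
    moreover have "card V = card ({1..h} \<times> {1::nat,3}) + card {(1::nat,2::nat),(h,2)}"
      unfolding V_def by (rule card_Un_disjoint) (use calculation in auto)
    ultimately show ?thesis by simp
  qed
  have wV: "is_word h 3 V" unfolding V_def is_word_def using assms by auto
  have "\<forall>c\<in>V. degree V c \<le> 2" using constr_deg[OF assms V_def] by auto
  hence "V \<in> W2 h 3" using wV unfolding W2_def by auto
  thus ?thesis using cV by blast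
qed



theorem mainTheorem5:
  fixes h :: nat and W :: "(nat \<times> nat) set"
  assumes "h \<ge> 3"
    and "W \<in> W2 h 3"
    and "two_full h 3 W"
    and "atomic h 3 W"
  shows "has_bench h W 1 2 \<and> has_bench h W 3 2"
proof -
  have w: "is_word h 3 W" and d: "\<forall>c\<in>W. degree W c \<le> 2" using assms(2) unfolding W2_def by auto
  obtain V where "V \<in> W2 h 3" "card V = 2*h+2" using construction[OF assms(1)] by blast
  hence "2*h+2 \<le> card W" using assms(3) unfolding two_full_def by metis
  hence S2: "Sn W h \<ge> 2" using Sn_card[OF w] by linarith
  have I: "Inv (R W (h-1)) (R W h) (fl W h) (Sn W h)" using inv_all[OF w d assms(4)] by simp
  have v: "vt (R W (h-1)) (R W h) (False,False,False)"
    using vt_R[OF w d, of h] Rh[OF w] assms(1) by simp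
  have E: "endok (R W (h-1)) (R W h) (fl W h)" by (rule endok_all)
  obtain o1 o3 f1 f3 where F: "fl W h = (o1,o3,f1,f3)" by (cases "fl W h") auto
  have "f1 \<and> f3"
  proof (rule ccontr)
    assume "\<not> (f1 \<and> f3)"
    with E v F have "BB (R W (h-1)) (R W h) (fl W h) \<noteq> -100 \<and> BB (R W (h-1)) (R W h) (fl W h) \<ge> 0"
      unfolding endok_def by simp
    with I S2 show False unfolding Inv_def by linarith
  qed
  hence "fnd W 1 h \<and> fnd W 3 h" using fl_sound[OF w, of h] F by simp
  thus ?thesis using fnd_bench by blast
qed


end
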